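(* Let $A\in\mathbb{R}^{n\times n}$, $B_i\in\mathbb{R}^{n\times p_i}$, $C_i\in\mathbb{R}^{q_i\times n}$, $i\in\{1,\dots,m\}$, define a jointly controllable and jointly observable $m$-channel linear system, let the neighbor graph $\mathbb{N}$ on $\{1,\dots,m\}$ be strongly connected, and let $F_i\in\mathbb{R}^{p_i\times n}$ be arbitrary. Let $b_i$ be the $i$th unit vector of $\mathbb{R}^m$ and define $\tilde A = I_{m}\otimes\big(A+\sum_{j=1}^m B_jF_j\big) - Q$, where $Q$ is the $nm\times nm$ block matrix whose $(i,j)$th $n\times n$ block is $B_jF_j$; $\tilde B_i = b_i\otimes I_n$; $\hat C_i = C_i\tilde B_i'$; $\tilde C_i = \mathrm{column}\{C_{ij^i_1},\dots,C_{ij^i_{m_i}}\}$ where $\{j^i_1,\dots,j^i_{m_i}\}=\mathcal{N}_i$ and $C_{ij}=(b_i'-b_j')\otimes I_n$. Then the $m$-channel linear system $$\dot\epsilon = \tilde A\epsilon + \sum_{j=1}^m\tilde B_j\tilde v_j,\qquad \tilde y_i = \begin{bmatrix}\hat C_i\\ \tilde C_i\end{bmatrix}\epsilon,\quad i\in\{1,\dots,m\},$$ is jointly controllable and jointly observable.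
   Context: An $m$-channel system $\{A,B_i,C_i;m\}$ is jointly controllable if $(A,[B_1\ \cdots\ B_m])$ is controllable and jointly observable if $(\mathrm{column}\{C_1,\dots,C_m\},A)$ is observable. The neighbor graph has an arc $j\to i$ iff $j$ is a neighbor of $i$; $\mathcal{N}_i$ is the set of neighbors of $i$ including $i$. $'$ denotes transpose and $\otimes$ the Kronecker product. *)

theory Defs
  imports "Jordan_Normal_Form.DL_Rank"
begin

definition hcat :: "real mat \<Rightarrow> real mat \<Rightarrow> real mat" where
  "hcat M1 M2 = four_block_mat M1 M2 (0\<^sub>m 0 (dim_col M1)) (0\<^sub>m 0 (dim_col M2))"

definition vcat :: "real mat \<Rightarrow> real mat \<Rightarrow> real mat" where
  "vcat M1 M2 = four_block_mat M1 (0\<^sub>m (dim_row M1) 0) M2 (0\<^sub>m (dim_row M2) 0)"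

definition hcat_list :: "nat \<Rightarrow> real mat list \<Rightarrow> real mat" where
  "hcat_list r Ms = foldr hcat Ms (0\<^sub>m r 0)"

definition vcat_list :: "nat \<Rightarrow> real mat list \<Rightarrow> real mat" where
  "vcat_list c Ms = foldr vcat Ms (0\<^sub>m 0 c)"

definition kron :: "real mat \<Rightarrow> real mat \<Rightarrow> real mat" where
  "kron M N = mat (dim_row M * dim_row N) (dim_col M * dim_col N)
     (\<lambda>(i,j). M $$ (i div dim_row N, j div dim_col N) * N $$ (i mod dim_row N, j mod dim_col N))"

definition controllable :: "real mat \<Rightarrow> real mat \<Rightarrow> bool" where
  "controllable A B \<longleftrightarrow>
     vec_space.rank (dim_row A) (hcat_list (dim_row A) (map (\<lambda>k. A ^\<^sub>m k * B) [0..<dim_row A]))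
       = dim_row A"

definition observable :: "real mat \<Rightarrow> real mat \<Rightarrow> bool" where
  "observable C A \<longleftrightarrow>
     (let Ob = vcat_list (dim_row A) (map (\<lambda>k. C * A ^\<^sub>m k) [0..<dim_row A])
      in vec_space.rank (dim_row Ob) Ob = dim_row A)"

(* m-channel system {A, B_i, C_i; m}, channels indexed 0..<m *)
definition jointly_controllable :: "real mat \<Rightarrow> (nat \<Rightarrow> real mat) \<Rightarrow> nat \<Rightarrow> bool" where
  "jointly_controllable A B m \<longleftrightarrow> controllable A (hcat_list (dim_row A) (map B [0..<m]))"

definition jointly_observable :: "real mat \<Rightarrow> (nat \<Rightarrow> real mat) \<Rightarrow> nat \<Rightarrow> bool" where
  "jointly_observable A C m \<longleftrightarrow> observable (vcat_list (dim_col A) (map C [0..<m])) A"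

(* neighbor graph: nbr i = N_i (neighbors of i, including i); arc j \<rightarrow> i iff j \<in> nbr i, j \<noteq> i *)
definition nbr_arcs :: "nat \<Rightarrow> (nat \<Rightarrow> nat set) \<Rightarrow> (nat \<times> nat) set" where
  "nbr_arcs m nbr = {(j, i). i < m \<and> j < m \<and> j \<in> nbr i \<and> j \<noteq> i}"

definition strongly_connected :: "nat \<Rightarrow> (nat \<Rightarrow> nat set) \<Rightarrow> bool" where
  "strongly_connected m nbr \<longleftrightarrow> (\<forall>i<m. \<forall>j<m. (i, j) \<in> (nbr_arcs m nbr)\<^sup>*)"

definition unitv :: "nat \<Rightarrow> nat \<Rightarrow> real mat" where
  "unitv m i = mat m 1 (\<lambda>(r, _). if r = i then 1 else 0)"

definition tA :: "nat \<Rightarrow> nat \<Rightarrow> real mat \<Rightarrow> (nat \<Rightarrow> real mat) \<Rightarrow> (nat \<Rightarrow> real mat) \<Rightarrow> real mat" where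
  "tA n m A B F =
     kron (1\<^sub>m m) (A + foldr (+) (map (\<lambda>j. B j * F j) [0..<m]) (0\<^sub>m n n))
     - mat (n * m) (n * m) (\<lambda>(r, c). (B (c div n) * F (c div n)) $$ (r mod n, c mod n))"

definition tB :: "nat \<Rightarrow> nat \<Rightarrow> nat \<Rightarrow> real mat" where
  "tB n m i = kron (unitv m i) (1\<^sub>m n)"

definition hC :: "nat \<Rightarrow> nat \<Rightarrow> (nat \<Rightarrow> real mat) \<Rightarrow> nat \<Rightarrow> real mat" where
  "hC n m C i = C i * transpose_mat (tB n m i)"

definition Cij :: "nat \<Rightarrow> nat \<Rightarrow> nat \<Rightarrow> nat \<Rightarrow> real mat" where
  "Cij n m i j = kron (transpose_mat (unitv m i) - transpose_mat (unitv m j)) (1\<^sub>m n)"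

definition tC :: "nat \<Rightarrow> nat \<Rightarrow> (nat \<Rightarrow> nat set) \<Rightarrow> nat \<Rightarrow> real mat" where
  "tC n m nbr i = vcat_list (n * m) (map (Cij n m i) (sorted_list_of_set (nbr i)))"

end

theory Submission
  imports Defs
begin


lemma hcat_carrier: "M1 \<in> carrier_mat r c1 \<Longrightarrow> M2 \<in> carrier_mat r c2 \<Longrightarrow> hcat M1 M2 \<in> carrier_mat r (c1 + c2)"
  unfolding hcat_def carrier_mat_def by auto

lemma hcat_list_eq:
  assumes "\<And>M. M \<in> set Ms \<Longrightarrow> M \<in> carrier_mat r c"
  shows "hcat_list r Ms = mat r (length Ms * c) (\<lambda>(i,j). (Ms ! (j div c)) $$ (i, j mod c))"
  using assms
proof (induction Ms)
  case Nil
  then show ?case unfolding hcat_list_def by (auto intro!: eq_matI)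
next
  case (Cons M Ms)
  have IH: "hcat_list r Ms = mat r (length Ms * c) (\<lambda>(i,j). (Ms ! (j div c)) $$ (i, j mod c))"
    using Cons by auto
  have M: "M \<in> carrier_mat r c" using Cons by auto
  have e: "hcat_list r (M # Ms) = hcat M (hcat_list r Ms)" unfolding hcat_list_def by simp
  show ?case unfolding e IH hcat_def
  proof (rule eq_matI)
    fix i j assume "i < dim_row (mat r (length (M # Ms) * c) (\<lambda>(i, j). ((M # Ms) ! (j div c)) $$ (i, j mod c)))"
      "j < dim_col (mat r (length (M # Ms) * c) (\<lambda>(i, j). ((M # Ms) ! (j div c)) $$ (i, j mod c)))"
    then have ij: "i < r" "j < c + length Ms * c" by auto
    show "four_block_mat M (mat r (length Ms * c) (\<lambda>(i, j). (Ms ! (j div c)) $$ (i, j mod c)))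
          (0\<^sub>m 0 (dim_col M)) (0\<^sub>m 0 (dim_col (mat r (length Ms * c) (\<lambda>(i, j). (Ms ! (j div c)) $$ (i, j mod c))))) $$ (i, j) =
          mat r (length (M # Ms) * c) (\<lambda>(i, j). ((M # Ms) ! (j div c)) $$ (i, j mod c)) $$ (i, j)"
    proof (cases "j < c")
      case True
      then show ?thesis using ij M by auto
    next
      case False
      then obtain k where k: "j = c + k" using le_Suc_ex not_less by blast
      have "c > 0" using False ij by (cases c) auto
      then have "j div c = Suc ((j - c) div c)" "j mod c = (j - c) mod c"
        unfolding k by auto
      moreover have "j - c < length Ms * c" using ij False by auto
      ultimately show ?thesis using ij M False by auto
    qed
  qed (use M in auto)
qed

lemma mvz_iff: "(M *\<^sub>v x = 0\<^sub>v (dim_row M)) \<longleftrightarrow> (\<forall>i<dim_row M. row M i \<bullet> x = 0)"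
  by (auto simp: vec_eq_iff)

lemma vcat_dims: "dim_row (vcat M1 M2) = dim_row M1 + dim_row M2" "dim_col (vcat M1 M2) = dim_col M1"
  unfolding vcat_def by auto

lemma vcat_row: assumes "dim_col M2 = dim_col M1" "i < dim_row M1 + dim_row M2"
  shows "row (vcat M1 M2) i = (if i < dim_row M1 then row M1 i else row M2 (i - dim_row M1))"
  using assms unfolding vcat_def by (auto intro!: eq_vecI)

lemma vcat_kernel: assumes "dim_col M2 = dim_col M1"
  shows "(vcat M1 M2 *\<^sub>v x = 0\<^sub>v (dim_row (vcat M1 M2))) \<longleftrightarrow>
    (M1 *\<^sub>v x = 0\<^sub>v (dim_row M1) \<and> M2 *\<^sub>v x = 0\<^sub>v (dim_row M2))"
proof -
  have "(\<forall>i<dim_row M1 + dim_row M2. row (vcat M1 M2) i \<bullet> x = 0) \<longleftrightarrow>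
     (\<forall>i<dim_row M1. row M1 i \<bullet> x = 0) \<and> (\<forall>i<dim_row M2. row M2 i \<bullet> x = 0)"
  proof safe
    fix i assume a: "\<forall>i<dim_row M1 + dim_row M2. row (vcat M1 M2) i \<bullet> x = 0" 
    { assume "i < dim_row M1" then show "row M1 i \<bullet> x = 0" using a[rule_format, of i] vcat_row[OF assms, of i] by auto }
    { assume i: "i < dim_row M2" then show "row M2 i \<bullet> x = 0" using a[rule_format, of "i + dim_row M1"] vcat_row[OF assms, of "i + dim_row M1"] by auto }
  next
    fix i assume "\<forall>i<dim_row M1. row M1 i \<bullet> x = 0" "\<forall>i<dim_row M2. row M2 i \<bullet> x = 0" "i < dim_row M1 + dim_row M2"
    then show "row (vcat M1 M2) i \<bullet> x = 0" using vcat_row[OF assms, of i] by auto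
  qed
  then show ?thesis using mvz_iff[of "vcat M1 M2" x] mvz_iff[of M1 x] mvz_iff[of M2 x] by (simp add: vcat_dims)
qed

lemma vcat_list_dims: assumes "\<And>M. M \<in> set Ms \<Longrightarrow> dim_col M = c"
  shows "dim_col (vcat_list c Ms) = c" "dim_row (vcat_list c Ms) = sum_list (map dim_row Ms)"
  using assms by (induction Ms) (auto simp: vcat_list_def vcat_dims)

lemma vcat_list_kernel: assumes "\<And>M. M \<in> set Ms \<Longrightarrow> dim_col M = c"
  shows "(vcat_list c Ms *\<^sub>v x = 0\<^sub>v (dim_row (vcat_list c Ms))) \<longleftrightarrow>
    (\<forall>M\<in>set Ms. M *\<^sub>v x = 0\<^sub>v (dim_row M))"
  using assms
proof (induction Ms)
  case Nil
  then show ?case by (auto simp: vcat_list_def vec_eq_iff)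
next
  case (Cons M Ms)
  have "vcat_list c (M # Ms) = vcat M (vcat_list c Ms)" unfolding vcat_list_def by simp
  moreover have "dim_col (vcat_list c Ms) = dim_col M" using vcat_list_dims(1)[of Ms c] Cons.prems by auto
  ultimately show ?case using vcat_kernel[of "vcat_list c Ms" M x] Cons by auto
qed

lemma mult_unit_vec_col: "(A :: 'a :: semiring_1 mat) \<in> carrier_mat n nc \<Longrightarrow> i < nc \<Longrightarrow> A *\<^sub>v unit_vec nc i = col A i"
  by (intro eq_vecI) (auto simp: scalar_prod_right_unit[where n=nc])

lemma (in vec_space) maximal_cols_exists: "\<exists>S. maximal S (\<lambda>T. T \<subseteq> set (cols A) \<and> lin_indpt T)"
proof -
  obtain S where "maximal S (\<lambda>T. T \<subseteq> set (cols A) \<and> lin_indpt T)"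
    using maximal_exists[of "(\<lambda>T. T \<subseteq> set (cols A) \<and> lin_indpt T)" "card (set (cols A))" "{}"]
    by (meson List.finite_set card_mono empty_iff empty_subsetI finite_lin_indpt2 rev_finite_subset)
  then show ?thesis by blast
qed

lemma (in vec_space) rank_le_nr: assumes "A \<in> carrier_mat n nc" shows "rank A \<le> n"
proof -
  obtain S where S: "maximal S (\<lambda>T. T \<subseteq> set (cols A) \<and> lin_indpt T)"
    using maximal_cols_exists by blast
  have "S \<subseteq> carrier_vec n" "lin_indpt S" using S assms cols_dim[of A] unfolding maximal_def by auto
  then have "card S \<le> dim" using li_le_dim(2)[OF fin_dim] by auto
  then show ?thesis using rank_card_indpt[OF assms S] dim_is_n by simp
qed

lemma (in vec_space) rank_full_col_iff: assumes A: "A \<in> carrier_mat n nc"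
  shows "rank A = nc \<longleftrightarrow> (\<forall>v\<in>carrier_vec nc. A *\<^sub>v v = 0\<^sub>v n \<longrightarrow> v = 0\<^sub>v nc)"
proof
  assume r: "rank A = nc"
  obtain S where S: "maximal S (\<lambda>T. T \<subseteq> set (cols A) \<and> lin_indpt T)"
    using maximal_cols_exists by blast
  have "card S \<le> card (set (cols A))" using S by (simp add: card_mono maximal_def)
  moreover have "card (set (cols A)) \<le> nc" using A by (metis card_length cols_length carrier_matD(2))
  ultimately have "card (set (cols A)) = nc" using rank_card_indpt[OF A S] r by simp
  then have d: "distinct (cols A)" using A by (metis card_distinct cols_length carrier_matD(2))
  have li: "lin_indpt (set (cols A))" using full_rank_lin_indpt[OF A r d] .
  show "\<forall>v\<in>carrier_vec nc. A *\<^sub>v v = 0\<^sub>v n \<longrightarrow> v = 0\<^sub>v nc"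
    using lin_depI[OF A _ _ _ d] li by blast
next
  assume k: "\<forall>v\<in>carrier_vec nc. A *\<^sub>v v = 0\<^sub>v n \<longrightarrow> v = 0\<^sub>v nc"
  have d: "distinct (cols A)"
  proof (rule ccontr)
    assume "\<not> distinct (cols A)"
    then obtain i j where ij: "i < length (cols A)" "j < length (cols A)" "i \<noteq> j" "cols A ! i = cols A ! j"
      using distinct_conv_nth by blast
    define v :: "'a vec" where "v = unit_vec nc i - unit_vec nc j"
    have ijn: "i < nc" "j < nc" using ij A by auto
    have v: "v \<in> carrier_vec nc" unfolding v_def by auto
    have "v $ i = 1" using ijn ij(3) unfolding v_def by auto
    then have "v \<noteq> 0\<^sub>v nc" using ijn by auto
    moreover have "A *\<^sub>v v = 0\<^sub>v n"
    proof -
      have "A *\<^sub>v v = A *\<^sub>v unit_vec nc i - A *\<^sub>v unit_vec nc j"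
        unfolding v_def using A by (auto simp: mult_minus_distrib_mat_vec)
      also have "\<dots> = col A i - col A j" using A ijn by (simp add: mult_unit_vec_col)
      also have "\<dots> = 0\<^sub>v n" using ij A by (auto simp: cols_nth)
      finally show ?thesis .
    qed
    ultimately show False using k v by auto
  qed
  have li: "lin_indpt (set (cols A))"
  proof (rule ccontr)
    assume "\<not> lin_indpt (set (cols A))"
    then obtain v where "v \<in> carrier_vec nc" "v \<noteq> 0\<^sub>v nc" "A *\<^sub>v v = 0\<^sub>v n"
      using lin_depE[OF A _ d] by blast
    then show False using k by auto
  qed
  show "rank A = nc" using lin_indpt_full_rank[OF A d li] .
qed

lemma (in vec_space) rank_ge_units: assumes A: "A \<in> carrier_mat n nc"
  and u: "\<And>i. i < n \<Longrightarrow> (unit_vec n i :: 'a vec) \<in> set (cols A)"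
  shows "rank A = n"
proof -
  have I: "1\<^sub>m n \<in> carrier_mat n n" by simp
  have "rank (1\<^sub>m n :: 'a mat) = n" using rank_full_col_iff[OF I] by auto
  obtain S where S: "maximal S (\<lambda>T. T \<subseteq> set (cols (1\<^sub>m n :: 'a mat)) \<and> lin_indpt T)"
    using maximal_cols_exists by blast
  have cS: "card S = n" using rank_card_indpt[OF I S] \<open>rank (1\<^sub>m n :: 'a mat) = n\<close> by simp
  have "set (cols (1\<^sub>m n :: 'a mat)) \<subseteq> set (cols A)"
  proof
    fix v assume "v \<in> set (cols (1\<^sub>m n :: 'a mat))"
    then obtain i where "i < n" "v = col (1\<^sub>m n :: 'a mat) i" by (metis cols_length cols_nth in_set_conv_nth index_one_mat(3))
    then show "v \<in> set (cols A)" using u by simp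
  qed
  then have "S \<subseteq> set (cols A)" "lin_indpt S" using S unfolding maximal_def by auto
  then have "rank A \<ge> n" using rank_ge_card_indpt[OF A] cS by metis
  then show ?thesis using rank_le_nr[OF A] by simp
qed




lemma sum_blocks: fixes g :: "nat \<Rightarrow> 'a::comm_monoid_add" and n m :: nat shows "(\<Sum>c<n*m. g c) = (\<Sum>j<m. \<Sum>s<n. g (j*n+s))"
proof -
  have "(\<Sum>c<n*m. g c) = (\<Sum>j<m. sum g {j*n..<j*n+n})"
    using sum.nat_group[of g n m] by (simp add: mult.commute)
  also have "\<dots> = (\<Sum>j<m. \<Sum>s<n. g (j*n+s))"
  proof (rule sum.cong[OF refl])
    fix j
    show "sum g {j*n..<j*n+n} = (\<Sum>s<n. g (j*n+s))"
      using sum.atLeastLessThan_shift_0[of g "j*n" "j*n+n"] by (simp add: atLeast0LessThan add.commute comp_def)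
  qed
  finally show ?thesis .
qed

lemma divmod_eq: fixes s n r i :: nat shows "s < n \<Longrightarrow> (r div n = i \<and> r mod n = s) \<longleftrightarrow> r = i*n + s"
proof
  assume "s < n" "r div n = i \<and> r mod n = s"
  then show "r = i*n + s" using div_mult_mod_eq[of r n] by simp
next
  assume "s < n" "r = i*n + s"
  then show "r div n = i \<and> r mod n = s" by simp
qed

lemma sum_delta_vec: "a < N \<Longrightarrow> (\<Sum>c\<in>{0..<N}. (if c = a then 1 else 0) * (y::real vec) $ c) = y $ a"
proof -
  assume a: "a < N"
  have "\<And>c. (if c = a then 1 else 0) * y $ c = (if c = a then y $ a else 0)" by simp
  then show ?thesis using a by simp
qed

definition blk :: "nat \<Rightarrow> nat \<Rightarrow> real vec \<Rightarrow> real vec" where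
  "blk n i y = vec n (\<lambda>s. y $ (i*n + s))"

definition rep :: "nat \<Rightarrow> nat \<Rightarrow> real vec \<Rightarrow> real vec" where
  "rep n m z = vec (n*m) (\<lambda>c. z $ (c mod n))"

lemma tB_dims: "dim_row (tB n m i) = n*m" "dim_col (tB n m i) = n"
  unfolding tB_def kron_def unitv_def by auto

lemma tB_entry: assumes "r < n*m" "c < n"
  shows "tB n m i $$ (r,c) = (if r = i*n + c then 1 else 0)"
proof -
  have "r < m * n" using assms by (simp add: mult.commute)
  then have "r div n < m" by (simp add: less_mult_imp_div_less)
  then show ?thesis using assms divmod_eq[of c n r i] unfolding tB_def kron_def unitv_def
    by (auto simp: mult.commute)
qed

lemma tBt_mult: assumes "y \<in> carrier_vec (n*m)" "i < m"
  shows "transpose_mat (tB n m i) *\<^sub>v y = blk n i y"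
proof (rule eq_vecI)
  show "dim_vec (transpose_mat (tB n m i) *\<^sub>v y) = dim_vec (blk n i y)"
    by (simp add: tB_dims blk_def)
  fix s assume "s < dim_vec (blk n i y)"
  then have s: "s < n" by (simp add: blk_def)
  have lt: "i*n + s < n*m"
  proof -
    have "i*n + s < i*n + n" using s by simp
    also have "\<dots> = (Suc i)*n" by simp
    also have "\<dots> \<le> m*n" using assms(2) by (intro mult_le_mono1) simp
    finally show ?thesis by (simp add: mult.commute)
  qed
  have "(transpose_mat (tB n m i) *\<^sub>v y) $ s = (\<Sum>c\<in>{0..<n*m}. tB n m i $$ (c, s) * y $ c)"
    using s assms(1) by (simp add: tB_dims scalar_prod_def col_def)
  also have "\<dots> = (\<Sum>c\<in>{0..<n*m}. (if c = i*n+s then 1 else 0) * y $ c)"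
    using s by (intro sum.cong) (auto simp: tB_entry)
  also have "\<dots> = y $ (i*n+s)" using sum_delta_vec[OF lt] .
  finally show "(transpose_mat (tB n m i) *\<^sub>v y) $ s = blk n i y $ s" using s by (simp add: blk_def)
qed

lemma idx_lt: fixes i s n m :: nat assumes "i < m" "s < n" shows "i*n + s < n*m"
proof -
  have "i*n + s < i*n + n" using assms by simp
  also have "\<dots> = (Suc i)*n" by simp
  also have "\<dots> \<le> m*n" using assms by (intro mult_le_mono1) simp
  finally show ?thesis by (simp add: mult.commute)
qed

lemma Cij_dims: "dim_row (Cij n m i j) = n" "dim_col (Cij n m i j) = n*m"
  unfolding Cij_def kron_def unitv_def by auto

lemma Cij_entry: assumes "r < n" "c < n*m"
  shows "Cij n m i j $$ (r,c) = (if c = i*n + r then 1 else 0) - (if c = j*n + r then 1 else 0)"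
proof -
  have "c < m * n" using assms by (simp add: mult.commute)
  then have cm: "c div n < m" by (simp add: less_mult_imp_div_less)
  have "Cij n m i j $$ (r,c) = ((if c div n = i then 1 else 0) - (if c div n = j then 1 else 0)) * (if r = c mod n then 1 else 0)"
    using assms cm unfolding Cij_def kron_def unitv_def by (simp add: mult.commute)
  also have "\<dots> = (if c = i*n + r then 1 else 0) - (if c = j*n + r then 1 else 0)"
    using divmod_eq[of r n c i] divmod_eq[of r n c j] assms by auto
  finally show ?thesis .
qed

lemma Cij_mult: assumes "y \<in> carrier_vec (n*m)" "i < m" "j < m"
  shows "Cij n m i j *\<^sub>v y = blk n i y - blk n j y"
proof (rule eq_vecI)
  show "dim_vec (Cij n m i j *\<^sub>v y) = dim_vec (blk n i y - blk n j y)"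
    by (simp add: Cij_dims blk_def)
  fix r assume "r < dim_vec (blk n i y - blk n j y)"
  then have r: "r < n" by (simp add: blk_def)
  have "(Cij n m i j *\<^sub>v y) $ r = (\<Sum>c\<in>{0..<n*m}. Cij n m i j $$ (r, c) * y $ c)"
    using r assms(1) by (simp add: Cij_dims scalar_prod_def row_def)
  also have "\<dots> = (\<Sum>c\<in>{0..<n*m}. (if c = i*n+r then 1 else 0) * y $ c - (if c = j*n+r then 1 else 0) * y $ c)"
    using r by (intro sum.cong) (auto simp: Cij_entry left_diff_distrib)
  also have "\<dots> = y $ (i*n+r) - y $ (j*n+r)"
    unfolding sum_subtractf using sum_delta_vec[OF idx_lt[OF assms(2) r]] sum_delta_vec[OF idx_lt[OF assms(3) r]] by simp
  finally show "(Cij n m i j *\<^sub>v y) $ r = (blk n i y - blk n j y) $ r" using r by (simp add: blk_def)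
qed




lemma foldr_plus_mat: assumes "\<And>M. M \<in> set L \<Longrightarrow> M \<in> carrier_mat n n"
  shows "foldr (+) L (0\<^sub>m n n) \<in> carrier_mat n n \<and>
    (\<forall>a<n. \<forall>b<n. foldr (+) L (0\<^sub>m n n) $$ (a,b) = sum_list (map (\<lambda>M. M $$ (a,b)) L))"
  using assms by (induction L) auto

lemma tA_rep:
  fixes G :: "nat \<Rightarrow> real mat"
  assumes A: "A \<in> carrier_mat n n" and G: "\<And>j. j < m \<Longrightarrow> G j \<in> carrier_mat n n"
    and z: "z \<in> carrier_vec n"
  shows "(kron (1\<^sub>m m) (A + foldr (+) (map G [0..<m]) (0\<^sub>m n n))
     - mat (n * m) (n * m) (\<lambda>(r, c). G (c div n) $$ (r mod n, c mod n))) *\<^sub>v rep n m z = rep n m (A *\<^sub>v z)"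
    (is "(kron _ ?X - ?Q) *\<^sub>v _ = _")
proof -
  let ?S = "foldr (+) (map G [0..<m]) (0\<^sub>m n n)"
  have Sc: "?S \<in> carrier_mat n n" and Se: "\<And>a b. a < n \<Longrightarrow> b < n \<Longrightarrow> ?S $$ (a,b) = (\<Sum>j<m. G j $$ (a,b))"
    using foldr_plus_mat[of "map G [0..<m]" n] G
    by (auto simp: sum_set_upt_conv_sum_list_nat[symmetric] atLeast0LessThan comp_def)
  have Xd: "dim_row ?X = n" "dim_col ?X = n" using Sc by auto
  have Xe: "\<And>a b. a < n \<Longrightarrow> b < n \<Longrightarrow> ?X $$ (a,b) = A $$ (a,b) + (\<Sum>j<m. G j $$ (a,b))"
    using Sc Se A by auto
  show ?thesis
  proof (rule eq_vecI)
    show "dim_vec ((kron (1\<^sub>m m) ?X - ?Q) *\<^sub>v rep n m z) = dim_vec (rep n m (A *\<^sub>v z))"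
      by (simp add: rep_def)
    fix r assume "r < dim_vec (rep n m (A *\<^sub>v z))"
    then have r: "r < n*m" by (simp add: rep_def)
    then have "r < m * n" by (simp add: mult.commute)
    then have rd: "r div n < m" by (simp add: less_mult_imp_div_less)
    have n0: "n > 0" using r by (cases n) auto
    have rm: "r mod n < n" using n0 by simp
    have entry: "\<And>c. c < n*m \<Longrightarrow> (kron (1\<^sub>m m) ?X - ?Q) $$ (r,c) =
       (if r div n = c div n then ?X $$ (r mod n, c mod n) else 0) - G (c div n) $$ (r mod n, c mod n)"
    proof -
      fix c assume c: "c < n*m"
      then have "c < m * n" by (simp add: mult.commute)
      then have cd: "c div n < m" by (simp add: less_mult_imp_div_less)
      show "(kron (1\<^sub>m m) ?X - ?Q) $$ (r,c) =
       (if r div n = c div n then ?X $$ (r mod n, c mod n) else 0) - G (c div n) $$ (r mod n, c mod n)"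
        using r c rd cd Xd unfolding kron_def by (simp add: mult.commute)
    qed
    have "((kron (1\<^sub>m m) ?X - ?Q) *\<^sub>v rep n m z) $ r =
        (\<Sum>c\<in>{0..<n*m}. (kron (1\<^sub>m m) ?X - ?Q) $$ (r,c) * z $ (c mod n))"
      using r by (simp add: scalar_prod_def row_def rep_def kron_def)
    also have "\<dots> = (\<Sum>c<n*m. ((if r div n = c div n then ?X $$ (r mod n, c mod n) else 0) - G (c div n) $$ (r mod n, c mod n)) * z $ (c mod n))"
      by (intro sum.cong) (auto simp: entry atLeast0LessThan)
    also have "\<dots> = (\<Sum>j<m. \<Sum>s<n. ((if r div n = j then ?X $$ (r mod n, s) else 0) - G j $$ (r mod n, s)) * z $ s)"
      unfolding sum_blocks by (intro sum.cong refl) auto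
    also have "\<dots> = (\<Sum>j<m. \<Sum>s<n. (if r div n = j then ?X $$ (r mod n, s) * z $ s else 0))
        - (\<Sum>j<m. \<Sum>s<n. G j $$ (r mod n, s) * z $ s)"
    proof -
      have e: "\<And>P (x::real) y w. ((if P then x else 0) - y) * w = (if P then x * w else 0) - y * w" by (simp add: left_diff_distrib)
      show ?thesis by (simp only: e sum_subtractf)
    qed
    also have "(\<Sum>j<m. \<Sum>s<n. (if r div n = j then ?X $$ (r mod n, s) * z $ s else 0))
        = (\<Sum>s<n. ?X $$ (r mod n, s) * z $ s)"
    proof -
      have "\<And>j. (\<Sum>s<n. (if r div n = j then ?X $$ (r mod n, s) * z $ s else 0)) =
          (if r div n = j then (\<Sum>s<n. ?X $$ (r mod n, s) * z $ s) else 0)" by simp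
      then show ?thesis using rd by simp
    qed
    also have "\<dots> = (\<Sum>s<n. A $$ (r mod n, s) * z $ s) + (\<Sum>s<n. \<Sum>j<m. G j $$ (r mod n, s) * z $ s)"
      using rm by (simp add: Xe distrib_right sum.distrib sum_distrib_right)
    also have "(\<Sum>s<n. \<Sum>j<m. G j $$ (r mod n, s) * z $ s) = (\<Sum>j<m. \<Sum>s<n. G j $$ (r mod n, s) * z $ s)"
      by (rule sum.swap)
    finally have "((kron (1\<^sub>m m) ?X - ?Q) *\<^sub>v rep n m z) $ r = (\<Sum>s<n. A $$ (r mod n, s) * z $ s)" by simp
    also have "\<dots> = (A *\<^sub>v z) $ (r mod n)"
      using A z rm by (simp add: scalar_prod_def row_def atLeast0LessThan)
    finally show "((kron (1\<^sub>m m) ?X - ?Q) *\<^sub>v rep n m z) $ r = rep n m (A *\<^sub>v z) $ r"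
      using r by (simp add: rep_def)
  qed
qed




lemma blk_rep: assumes "w \<in> carrier_vec n" "i < m" shows "blk n i (rep n m w) = w"
  using assms idx_lt[OF assms(2)] by (auto simp: blk_def rep_def intro!: eq_vecI)

lemma rep_carrier: "rep n m w \<in> carrier_vec (n*m)" by (simp add: rep_def)

lemma tA_carrier: "tA n m A B F \<in> carrier_mat (n*m) (n*m)"
  unfolding tA_def by auto

lemma tA_rep': assumes A: "A \<in> carrier_mat n n" and BF: "\<And>j. j < m \<Longrightarrow> B j * F j \<in> carrier_mat n n"
  and z: "z \<in> carrier_vec n"
  shows "tA n m A B F *\<^sub>v rep n m z = rep n m (A *\<^sub>v z)"
  unfolding tA_def using tA_rep[of A n m "\<lambda>j. B j * F j" z] assms by simp

lemma tA_pow_rep: assumes A: "A \<in> carrier_mat n n" and BF: "\<And>j. j < m \<Longrightarrow> B j * F j \<in> carrier_mat n n"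
  and z: "z \<in> carrier_vec n"
  shows "(tA n m A B F ^\<^sub>m k) *\<^sub>v rep n m z = rep n m ((A ^\<^sub>m k) *\<^sub>v z)"
  using z
proof (induction k arbitrary: z)
  case 0
  then show ?case using tA_carrier[of n m A B F] A by (simp add: rep_def)
next
  case (Suc k)
  have T: "tA n m A B F \<in> carrier_mat (n*m) (n*m)" by (rule tA_carrier)
  have "(tA n m A B F ^\<^sub>m Suc k) *\<^sub>v rep n m z = (tA n m A B F ^\<^sub>m k) *\<^sub>v (tA n m A B F *\<^sub>v rep n m z)"
  proof -
    have Tk: "tA n m A B F ^\<^sub>m k \<in> carrier_mat (n*m) (n*m)" using T by simp
    show ?thesis using assoc_mult_mat_vec[OF Tk T rep_carrier] by simp
  qed
  also have "\<dots> = (tA n m A B F ^\<^sub>m k) *\<^sub>v rep n m (A *\<^sub>v z)" using tA_rep'[OF A BF Suc.prems] by simp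
  also have "\<dots> = rep n m ((A ^\<^sub>m k) *\<^sub>v (A *\<^sub>v z))" using Suc.IH A Suc.prems by simp
  also have "(A ^\<^sub>m k) *\<^sub>v (A *\<^sub>v z) = (A ^\<^sub>m Suc k) *\<^sub>v z"
  proof -
    have Ak: "A ^\<^sub>m k \<in> carrier_mat n n" using A by simp
    show ?thesis using assoc_mult_mat_vec[OF Ak A Suc.prems] by simp
  qed
  finally show ?case .
qed




lemma hcat_list_rows: assumes "\<And>M. M \<in> set Ms \<Longrightarrow> dim_row M = r"
  shows "dim_row (hcat_list r Ms) = r"
  using assms by (induction Ms) (auto simp: hcat_list_def hcat_def)

lemma tB_carrier: "tB n m x \<in> carrier_mat (n*m) n"
  unfolding carrier_mat_def using tB_dims[of n m x] by blast

lemma tB_key: assumes i: "i < n*m" and j: "j < n*m"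
  shows "(map (tB n m) [0..<m] ! (j div n)) $$ (i, j mod n) = (if i = j then 1 else 0)"
proof -
  have "j < m * n" using j mult.commute[of m n] by linarith
  then have jd: "j div n < m" by (simp add: less_mult_imp_div_less)
  have n0: "n > 0"
  proof (rule ccontr)
    assume "\<not> n > 0" then have "n = 0" by simp
    then show False using j by simp
  qed
  have jm: "j mod n < n" using n0 by simp
  have t0: "tB n m (j div n) $$ (i, j mod n) = (if i = (j div n) * n + j mod n then 1 else 0)"
    using tB_entry[OF i jm] .
  have dm: "(j div n) * n + j mod n = j" by (rule div_mult_mod_eq)
  have t: "tB n m (j div n) $$ (i, j mod n) = (if i = j then 1 else 0)"
    using t0 unfolding dm .
  have "map (tB n m) [0..<m] ! (j div n) = tB n m (j div n)" using jd by simp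
  then show ?thesis using t by simp
qed

lemma tB_hcat: "hcat_list (n*m) (map (tB n m) [0..<m]) = 1\<^sub>m (n*m)"
proof -
  have c: "\<And>M. M \<in> set (map (tB n m) [0..<m]) \<Longrightarrow> M \<in> carrier_mat (n*m) n"
  proof -
    fix M assume "M \<in> set (map (tB n m) [0..<m])"
    then obtain x where "M = tB n m x" by auto
    then show "M \<in> carrier_mat (n*m) n" using tB_carrier[of n m x] by simp
  qed
  have len: "length (map (tB n m) [0..<m]) * n = n * m" by simp
  have e: "hcat_list (n*m) (map (tB n m) [0..<m]) =
      mat (n*m) (n*m) (\<lambda>(i,j). (map (tB n m) [0..<m] ! (j div n)) $$ (i, j mod n))"
    using hcat_list_eq[where Ms="map (tB n m) [0..<m]" and r="n*m" and c=n, OF c] unfolding len .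
  show ?thesis unfolding e
    by (rule eq_matI) (simp_all add: tB_key)
qed

lemma hcat_col: assumes "dim_row M2 = dim_row M1" "j < dim_col M1"
  shows "col (hcat M1 M2) j = col M1 j"
proof (rule eq_vecI)
  show "dim_vec (col (hcat M1 M2) j) = dim_vec (col M1 j)" unfolding hcat_def by simp
  fix i assume "i < dim_vec (col M1 j)"
  then have i: "i < dim_row M1" by simp
  have "col (hcat M1 M2) j $ i = hcat M1 M2 $$ (i, j)"
    using i assms unfolding hcat_def by (simp add: col_def)
  also have "\<dots> = M1 $$ (i,j)" using i assms unfolding hcat_def by simp
  finally show "col (hcat M1 M2) j $ i = col M1 j $ i" using i assms by simp
qed

lemma hcat_dim_col: "dim_col (hcat M1 M2) = dim_col M1 + dim_col M2" unfolding hcat_def by simp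


lemma controllable_new: "jointly_controllable (tA n m A B F) (tB n m) m"
proof -
  let ?T = "tA n m A B F" let ?N = "n*m"
  have dT: "dim_row ?T = ?N" using tA_carrier[of n m A B F] by auto
  let ?K = "hcat_list ?N (map (\<lambda>k. ?T ^\<^sub>m k * 1\<^sub>m ?N) [0..<?N])"
  have rK: "dim_row ?K = ?N" by (rule hcat_list_rows) (auto simp: dT)
  have K: "?K \<in> carrier_mat ?N (dim_col ?K)" using rK by auto
  have u: "unit_vec ?N i \<in> set (cols ?K)" if i: "i < ?N" for i
  proof -
    have "0 < ?N" using i by linarith
    then have "[0..<?N] = 0 # [1..<?N]" using upt_conv_Cons[of 0 "?N"] by simp
    moreover have "?T ^\<^sub>m 0 * 1\<^sub>m ?N = 1\<^sub>m ?N" using dT by simp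
    ultimately have e: "?K = hcat (1\<^sub>m ?N) (hcat_list ?N (map (\<lambda>k. ?T ^\<^sub>m k * 1\<^sub>m ?N) [1..<?N]))"
      unfolding hcat_list_def by simp
    have r2: "dim_row (hcat_list ?N (map (\<lambda>k. ?T ^\<^sub>m k * 1\<^sub>m ?N) [1..<?N])) = ?N"
      by (rule hcat_list_rows) (auto simp: dT)
    have "col ?K i = col (1\<^sub>m ?N) i"
      unfolding e using i r2 by (intro hcat_col) auto
    also have "\<dots> = unit_vec ?N i" using i by simp
    finally have ci: "col ?K i = unit_vec ?N i" .
    have "i < dim_col ?K" unfolding e using i by (simp add: hcat_dim_col)
    then have "cols ?K ! i = col ?K i" "i < length (cols ?K)" by auto
    then show ?thesis using ci nth_mem by metis
  qed
  show ?thesis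
    unfolding jointly_controllable_def controllable_def dT tB_hcat
    by (rule vec_space.rank_ge_units[OF K u])
qed




lemma strongly_conn_eq: assumes sc: "strongly_connected m nbr"
  and h: "\<And>i j. i < m \<Longrightarrow> j \<in> nbr i \<Longrightarrow> j < m \<Longrightarrow> f i = f j" and m: "0 < m" and i: "i < m"
  shows "f i = f 0"
proof -
  have "(0, i) \<in> (nbr_arcs m nbr)\<^sup>*" using sc m i unfolding strongly_connected_def by auto
  then show ?thesis
  proof (induction rule: rtrancl_induct)
    case base then show ?case by simp
  next
    case (step b c)
    then have "c < m" "b \<in> nbr c" "b < m" unfolding nbr_arcs_def by auto
    then show ?case using h step.IH by metis
  qed
qed

lemma rep_of_blk: assumes v: "v \<in> carrier_vec (n*m)" and h: "\<And>i. i < m \<Longrightarrow> blk n i v = blk n 0 v"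
  shows "v = rep n m (blk n 0 v)"
proof (rule eq_vecI)
  show "dim_vec v = dim_vec (rep n m (blk n 0 v))" using v by (simp add: rep_def)
  fix c assume "c < dim_vec (rep n m (blk n 0 v))"
  then have c: "c < n*m" by (simp add: rep_def)
  then have "c < m * n" by (simp add: mult.commute)
  then have cd: "c div n < m" by (simp add: less_mult_imp_div_less)
  have n0: "n > 0" using c by (cases n) auto
  have cm: "c mod n < n" using n0 by simp
  have "v $ c = blk n (c div n) v $ (c mod n)" using cm by (simp add: blk_def mult.commute)
  also have "\<dots> = blk n 0 v $ (c mod n)" using h[OF cd] by simp
  finally show "v $ c = rep n m (blk n 0 v) $ c" using c by (simp add: rep_def)
qed




theorem lemma1:
  fixes n m :: nat and p q :: "nat \<Rightarrow> nat"
    and A :: "real mat" and B C F :: "nat \<Rightarrow> real mat"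
    and nbr :: "nat \<Rightarrow> nat set"
  assumes "A \<in> carrier_mat n n"
    and "\<And>i. i < m \<Longrightarrow> B i \<in> carrier_mat n (p i)"
    and "\<And>i. i < m \<Longrightarrow> C i \<in> carrier_mat (q i) n"
    and "\<And>i. i < m \<Longrightarrow> F i \<in> carrier_mat (p i) n"
    and "\<And>i. i < m \<Longrightarrow> nbr i \<subseteq> {0..<m}"
    and "\<And>i. i < m \<Longrightarrow> i \<in> nbr i"
    and "jointly_controllable A B m"
    and "jointly_observable A C m"
    and "strongly_connected m nbr"
  shows "jointly_controllable (tA n m A B F) (tB n m) m
       \<and> jointly_observable (tA n m A B F) (\<lambda>i. vcat (hC n m C i) (tC n m nbr i)) m"
proof
  show "jointly_controllable (tA n m A B F) (tB n m) m" by (rule controllable_new)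
next
  have A: "A \<in> carrier_mat n n" using assms(1) .
  have BF: "\<And>j. j < m \<Longrightarrow> B j * F j \<in> carrier_mat n n" using assms(2,4) by (meson mult_carrier_mat)
  have Cc: "\<And>i. i < m \<Longrightarrow> C i \<in> carrier_mat (q i) n" using assms(3) .
  have Ccol: "\<And>i. i < m \<Longrightarrow> dim_col (C i) = n" using Cc by (meson carrier_matD(2))
  have Crow: "\<And>i. i < m \<Longrightarrow> dim_row (C i) = q i" using Cc by (meson carrier_matD(1))
  let ?T = "tA n m A B F" let ?N = "n*m"
  let ?Cf = "\<lambda>i. vcat (hC n m C i) (tC n m nbr i)"
  let ?Cst = "vcat_list ?N (map ?Cf [0..<m])"
  let ?Ob = "vcat_list ?N (map (\<lambda>k. ?Cst * ?T ^\<^sub>m k) [0..<?N])"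
  have T: "?T \<in> carrier_mat ?N ?N" by (rule tA_carrier)
  have hCd: "\<And>i. dim_col (hC n m C i) = ?N" by (simp add: hC_def tB_dims)
  have tCd: "\<And>i. dim_col (tC n m nbr i) = ?N" unfolding tC_def
    by (rule vcat_list_dims(1)) (auto simp: Cij_dims)
  have Cfd: "\<And>i. dim_col (?Cf i) = ?N" by (simp add: vcat_dims hCd)
  have Cstd: "dim_col ?Cst = ?N" by (rule vcat_list_dims(1)) (auto simp: Cfd)
  have Cst: "?Cst \<in> carrier_mat (dim_row ?Cst) ?N" using Cstd by auto
  have Obd: "dim_col ?Ob = ?N" by (rule vcat_list_dims(1)) (use T in auto)
  have Ob: "?Ob \<in> carrier_mat (dim_row ?Ob) ?N" using Obd by auto
  have Cker: "hC n m C i *\<^sub>v w = 0\<^sub>v (q i) \<and> (\<forall>j\<in>nbr i. blk n i w = blk n j w)"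
    if w: "w \<in> carrier_vec ?N" and Cw: "?Cst *\<^sub>v w = 0\<^sub>v (dim_row ?Cst)" and i: "i < m" for w i
  proof -
    have pr: "\<And>M. M \<in> set (map ?Cf [0..<m]) \<Longrightarrow> dim_col M = ?N" using Cfd by auto
    have "\<forall>M\<in>set (map ?Cf [0..<m]). M *\<^sub>v w = 0\<^sub>v (dim_row M)"
      by (rule vcat_list_kernel[THEN iffD1, OF pr Cw])
    then have "?Cf i *\<^sub>v w = 0\<^sub>v (dim_row (?Cf i))" using i by auto
    then have 1: "hC n m C i *\<^sub>v w = 0\<^sub>v (dim_row (hC n m C i))" and
      2: "tC n m nbr i *\<^sub>v w = 0\<^sub>v (dim_row (tC n m nbr i))"
      using vcat_kernel[of "tC n m nbr i" "hC n m C i" w] by (auto simp: hCd tCd)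
    have "dim_row (hC n m C i) = q i" using Cc[OF i] by (simp add: hC_def)
    with 1 have h1: "hC n m C i *\<^sub>v w = 0\<^sub>v (q i)" by simp
    have fin: "finite (nbr i)" using assms(5)[OF i] finite_subset by blast
    have pr2: "\<And>M. M \<in> set (map (Cij n m i) (sorted_list_of_set (nbr i))) \<Longrightarrow> dim_col M = ?N"
      by (auto simp: Cij_dims)
    have "\<forall>M\<in>set (map (Cij n m i) (sorted_list_of_set (nbr i))). M *\<^sub>v w = 0\<^sub>v (dim_row M)"
      by (rule vcat_list_kernel[THEN iffD1, OF pr2 2[unfolded tC_def]])
    then have "\<forall>j\<in>nbr i. Cij n m i j *\<^sub>v w = 0\<^sub>v n" using fin by (auto simp: Cij_dims)
    then have "\<forall>j\<in>nbr i. blk n i w = blk n j w"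
    proof (intro ballI)
      fix j assume "\<forall>j\<in>nbr i. Cij n m i j *\<^sub>v w = 0\<^sub>v n" "j \<in> nbr i"
      moreover have "j < m" using assms(5)[OF i] \<open>j \<in> nbr i\<close> by auto
      ultimately have "blk n i w - blk n j w = 0\<^sub>v n" using Cij_mult[OF w i] by auto
      then show "blk n i w = blk n j w" by (auto simp: blk_def vec_eq_iff)
    qed
    then show ?thesis using h1 by simp
  qed
  have ker: "v = 0\<^sub>v ?N" if v: "v \<in> carrier_vec ?N" and Obv: "?Ob *\<^sub>v v = 0\<^sub>v (dim_row ?Ob)" for v
  proof (cases "?N = 0")
    case True
    then show ?thesis using v by (auto intro!: eq_vecI)
  next
    case False
    then have n0: "n > 0" and m0: "m > 0" by auto
    have k: "?Cst *\<^sub>v (?T ^\<^sub>m k *\<^sub>v v) = 0\<^sub>v (dim_row ?Cst)" if k: "k < ?N" for k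
    proof -
      have pr: "\<And>M. M \<in> set (map (\<lambda>k. ?Cst * ?T ^\<^sub>m k) [0..<?N]) \<Longrightarrow> dim_col M = ?N"
        using T by auto
      have "\<forall>M\<in>set (map (\<lambda>k. ?Cst * ?T ^\<^sub>m k) [0..<?N]). M *\<^sub>v v = 0\<^sub>v (dim_row M)"
        by (rule vcat_list_kernel[THEN iffD1, OF pr Obv])
      then have "(?Cst * ?T ^\<^sub>m k) *\<^sub>v v = 0\<^sub>v (dim_row ?Cst)" using k by auto
      moreover have Tk: "?T ^\<^sub>m k \<in> carrier_mat ?N ?N" using T by simp
      ultimately show ?thesis using assoc_mult_mat_vec[OF Cst Tk v] by simp
    qed
    have "?Cst *\<^sub>v v = 0\<^sub>v (dim_row ?Cst)" using k[of 0] False T v by simp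
    then have eqs: "\<And>i j. i < m \<Longrightarrow> j \<in> nbr i \<Longrightarrow> j < m \<Longrightarrow> blk n i v = blk n j v"
      using Cker[OF v] by blast
    define z where "z = blk n 0 v"
    have z: "z \<in> carrier_vec n" by (simp add: z_def blk_def)
    have "\<And>i. i < m \<Longrightarrow> blk n i v = blk n 0 v"
      using strongly_conn_eq[of m nbr "\<lambda>i. blk n i v", OF assms(9) eqs m0] by blast
    then have vz: "v = rep n m z" unfolding z_def using rep_of_blk[OF v] by blast
    have Cz: "C i *\<^sub>v ((A ^\<^sub>m k) *\<^sub>v z) = 0\<^sub>v (q i)" if i: "i < m" and kk: "k < ?N" for i k
    proof -
      let ?w = "(A ^\<^sub>m k) *\<^sub>v z"
      have Ak: "A ^\<^sub>m k \<in> carrier_mat n n" using A by simp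
      have w: "?w \<in> carrier_vec n" using mult_mat_vec_carrier[OF Ak z] .
      have "?T ^\<^sub>m k *\<^sub>v v = rep n m ?w" unfolding vz using tA_pow_rep[where m=m and B=B and F=F and k=k, OF A BF z] by simp
      then have hh: "?Cst *\<^sub>v rep n m ?w = 0\<^sub>v (dim_row ?Cst)" using k[OF kk] by simp
      have "hC n m C i *\<^sub>v rep n m ?w = 0\<^sub>v (q i)"
        using conjunct1[OF Cker[OF rep_carrier hh i]] .
      moreover have "hC n m C i *\<^sub>v rep n m ?w = C i *\<^sub>v ?w"
      proof -
        have tBt: "transpose_mat (tB n m i) \<in> carrier_mat n ?N" using transpose_carrier_mat tB_carrier by blast
        have "hC n m C i *\<^sub>v rep n m ?w = C i *\<^sub>v (transpose_mat (tB n m i) *\<^sub>v rep n m ?w)"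
          unfolding hC_def using assoc_mult_mat_vec[OF Cc[OF i] tBt rep_carrier] .
        also have "\<dots> = C i *\<^sub>v ?w" using tBt_mult[OF rep_carrier i] blk_rep[OF w i] by simp
        finally show ?thesis .
      qed
      ultimately show ?thesis by simp
    qed
    let ?C0 = "vcat_list n (map C [0..<m])"
    let ?Ob0 = "vcat_list n (map (\<lambda>k. ?C0 * A ^\<^sub>m k) [0..<n])"
    have obs: "vec_space.rank (dim_row ?Ob0) ?Ob0 = n"
      using assms(8) A unfolding jointly_observable_def observable_def Let_def by simp
    have C0d: "dim_col ?C0 = n" by (rule vcat_list_dims(1)) (use Ccol in auto)
    have C0: "?C0 \<in> carrier_mat (dim_row ?C0) n" using C0d by auto
    have Ob0d: "dim_col ?Ob0 = n" by (rule vcat_list_dims(1)) (use A in auto)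
    have Ob0: "?Ob0 \<in> carrier_mat (dim_row ?Ob0) n" using Ob0d by auto
    have "?Ob0 *\<^sub>v z = 0\<^sub>v (dim_row ?Ob0)"
    proof -
      have "(?C0 * A ^\<^sub>m k) *\<^sub>v z = 0\<^sub>v (dim_row (?C0 * A ^\<^sub>m k))" if k: "k < n" for k
      proof -
        have "n \<le> n * m" using m0 by simp
        then have kN: "k < ?N" using k by linarith
        have Ak: "A ^\<^sub>m k \<in> carrier_mat n n" using A by simp
        have allC: "\<forall>M\<in>set (map C [0..<m]). M *\<^sub>v ((A ^\<^sub>m k) *\<^sub>v z) = 0\<^sub>v (dim_row M)"
          using Cz[OF _ kN] Crow by auto
        have pr: "\<And>M. M \<in> set (map C [0..<m]) \<Longrightarrow> dim_col M = n"
          using Ccol by auto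
        have "?C0 *\<^sub>v ((A ^\<^sub>m k) *\<^sub>v z) = 0\<^sub>v (dim_row ?C0)"
          using vcat_list_kernel[where Ms="map C [0..<m]" and c=n and x="(A ^\<^sub>m k) *\<^sub>v z", OF pr] allC by simp
        then show ?thesis using assoc_mult_mat_vec[OF C0 Ak z] by simp
      qed
      then have all: "\<forall>M\<in>set (map (\<lambda>k. ?C0 * A ^\<^sub>m k) [0..<n]). M *\<^sub>v z = 0\<^sub>v (dim_row M)" by auto
      have pr: "\<And>M. M \<in> set (map (\<lambda>k. ?C0 * A ^\<^sub>m k) [0..<n]) \<Longrightarrow> dim_col M = n"
        using A by auto
      show ?thesis
        using vcat_list_kernel[where Ms="map (\<lambda>k. ?C0 * A ^\<^sub>m k) [0..<n]" and c=n and x=z, OF pr] all by simp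
    qed
    moreover have "\<forall>v\<in>carrier_vec n. ?Ob0 *\<^sub>v v = 0\<^sub>v (dim_row ?Ob0) \<longrightarrow> v = 0\<^sub>v n"
      using vec_space.rank_full_col_iff[OF Ob0] obs by simp
    ultimately have "z = 0\<^sub>v n" using z by simp
    then show ?thesis unfolding vz using n0 by (auto simp: rep_def intro!: eq_vecI)
  qed
  have "vec_space.rank (dim_row ?Ob) ?Ob = ?N"
    using vec_space.rank_full_col_iff[OF Ob] ker by simp
  then show "jointly_observable ?T ?Cf m"
    using T unfolding jointly_observable_def observable_def Let_def by simp
qed


end
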